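(* For $k\in\mathcal N$, let $\pi^k$ be the stationary distribution of the single-server queue under the threshold policy with threshold $k$ (active at states $0,\dots,k$, passive at states $\ge k+1$). Then $\sum_{j=0}^k \pi^k(j)$ is an increasing function of $k$.
   Context: Single-server queue: Bernoulli($p$) arrivals, $X_{t+1}=X_t-D_{t+1}+\nu_t\xi_{t+1}$ on $\mathcal N=\{0,1,\dots\}$, $\nu_t\in\{0,1\}$ with arrivals admitted only when $\nu_t=1$; given $X_t=x\ge1$, $D_{t+1}\sim\mathrm{Binomial}(x,q/x)$, no departures at $x=0$; $1>q>2p>0$. Under the threshold-$k$ policy the recurrent class is $\{0,1,\dots,k+1\}$. *)

theory Defs
  imports "HOL-Probability.Probability"
begin

definition thr_policy :: "nat \<Rightarrow> nat \<Rightarrow> bool" where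
  "thr_policy k x \<longleftrightarrow> x \<le> k"

definition queue_trans :: "real \<Rightarrow> real \<Rightarrow> nat \<Rightarrow> nat \<Rightarrow> nat pmf" where
  "queue_trans p q k x =
     bind_pmf (if x = 0 then return_pmf 0 else binomial_pmf x (q / real x)) (\<lambda>d.
     bind_pmf (bernoulli_pmf p) (\<lambda>xi.
       return_pmf (x - d + (if thr_policy k x \<and> xi then 1 else 0))))"

definition stationary :: "real \<Rightarrow> real \<Rightarrow> nat \<Rightarrow> nat pmf \<Rightarrow> bool" where
  "stationary p q k \<pi> \<longleftrightarrow> bind_pmf \<pi> (queue_trans p q k) = \<pi>"

end

theory Submission
  imports Defs
begin
lemma measure_bind_pmf_real:
  "measure (measure_pmf (bind_pmf M N)) X = (\<integral>x. measure (measure_pmf (N x)) X \<partial>measure_pmf M)"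
proof -
  have i: "integrable (measure_pmf M) (\<lambda>x. measure (measure_pmf (N x)) X)"
    by (rule measure_pmf.integrable_const_bound[where B=1]) auto
  have "ennreal (measure (measure_pmf (bind_pmf M N)) X) = emeasure (bind_pmf M N) X"
    by (simp add: measure_pmf.emeasure_eq_measure)
  also have "\<dots> = (\<integral>\<^sup>+x. emeasure (N x) X \<partial>M)"
    by (rule emeasure_bind_pmf)
  also have "\<dots> = (\<integral>\<^sup>+x. ennreal (measure (measure_pmf (N x)) X) \<partial>M)"
    by (simp add: measure_pmf.emeasure_eq_measure)
  also have "\<dots> = ennreal (\<integral>x. measure (measure_pmf (N x)) X \<partial>measure_pmf M)"
    by (rule nn_integral_eq_integral[OF i]) auto
  finally show ?thesis by (simp add: integral_nonneg_AE)
qed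

definition Dd :: "real \<Rightarrow> nat \<Rightarrow> nat pmf" where
  "Dd q x = (if x = 0 then return_pmf 0 else binomial_pmf x (q / real x))"

definition aa :: "real \<Rightarrow> nat \<Rightarrow> real" where
  "aa q j = pmf (Dd q j) 0"

definition AA :: "real \<Rightarrow> real \<Rightarrow> nat \<Rightarrow> nat \<Rightarrow> nat \<Rightarrow> real" where
  "AA p q k x j = measure (measure_pmf (queue_trans p q k x)) {..j}"

lemma Dd_support: "0 < q \<Longrightarrow> q < 1 \<Longrightarrow> set_pmf (Dd q x) \<subseteq> {..x}"
proof -
  assume q: "0 < q" "q < 1"
  show ?thesis
  proof (cases "x = 0")
    case True then show ?thesis by (simp add: Dd_def)
  next
    case False
    then have "q / real x < 1" "0 < q / real x" using q
      by (auto simp: divide_less_eq)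
    with False show ?thesis by (simp add: Dd_def)
  qed
qed

lemma pmf_Dd: "0 < q \<Longrightarrow> q < 1 \<Longrightarrow> 0 < x \<Longrightarrow>
   pmf (Dd q x) d = (if d \<le> x then real (x choose d) * (q / x) ^ d * (1 - q / x) ^ (x - d) else 0)"
proof -
  assume q: "0 < q" "q < 1" "0 < x"
  then have "q / real x \<le> 1" "0 \<le> q / real x"
    by (auto simp: divide_le_eq)
  then show ?thesis using q by (simp add: Dd_def)
qed

lemma aa_pos: "0 < q \<Longrightarrow> q < 1 \<Longrightarrow> 0 < aa q j"
proof -
  assume q: "0 < q" "q < 1"
  show ?thesis
  proof (cases "j = 0")
    case True then show ?thesis by (simp add: aa_def Dd_def)
  next
    case False
    then have "q / real j < 1" using q by (auto simp: divide_less_eq)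
    then show ?thesis using q False by (simp add: aa_def pmf_Dd)
  qed
qed

lemma aa_le: "0 < q \<Longrightarrow> q < 1 \<Longrightarrow> 1 \<le> m \<Longrightarrow> aa q m \<le> 1 / (1 + q)"
proof -
  assume q: "0 < q" "q < 1" "1 \<le> m"
  define t where "t = q / real m"
  have t: "0 \<le> t" "t < 1" "real m * t = q" using q by (auto simp: t_def divide_less_eq)
  have a: "aa q m = (1 - t) ^ m" using q by (simp add: aa_def pmf_Dd t_def)
  have "1 + q \<le> (1 + t) ^ m" using Bernoulli_inequality[of t m] t by simp
  moreover have "(1 - t) ^ m * (1 + t) ^ m \<le> 1"
  proof -
    have "(1 - t) ^ m * (1 + t) ^ m = (1 - t^2) ^ m"
      by (simp add: power_mult_distrib[symmetric] power2_eq_square algebra_simps)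
    also have "\<dots> \<le> 1" using t by (intro power_le_one) (auto simp: power2_eq_square mult_le_one)
    finally show ?thesis .
  qed
  moreover have "0 \<le> (1 - t) ^ m" using t by simp
  ultimately have "(1 - t) ^ m * (1 + q) \<le> 1"
    by (meson mult_left_mono order_trans)
  then show ?thesis using a q by (simp add: field_simps)
qed

lemma pmf_Dd_top: "0 < q \<Longrightarrow> q < 1 \<Longrightarrow> 0 < pmf (Dd q x) x"
  by (cases "x = 0") (auto simp: Dd_def pmf_Dd)

definition gg :: "real \<Rightarrow> nat \<Rightarrow> nat \<Rightarrow> nat \<Rightarrow> nat \<Rightarrow> real" where
  "gg p k x j d = (if x \<le> k then p * of_bool (x - d + 1 \<le> j) + (1 - p) * of_bool (x - d \<le> j)
                   else of_bool (x - d \<le> j))"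

lemma AA_sum:
  assumes p: "0 \<le> p" "p \<le> 1" and q: "0 < q" "q < 1"
  shows "AA p q k x j = (\<Sum>d\<le>x. gg p k x j d * pmf (Dd q x) d)"
proof -
  have qt: "queue_trans p q k x = bind_pmf (Dd q x) (\<lambda>d. bind_pmf (bernoulli_pmf p) (\<lambda>xi.
       return_pmf (x - d + (if thr_policy k x \<and> xi then 1 else 0))))"
    by (simp add: queue_trans_def Dd_def)
  have "AA p q k x j = (\<integral>d. gg p k x j d \<partial>measure_pmf (Dd q x))"
    unfolding AA_def qt measure_bind_pmf_real using p
    by (intro Bochner_Integration.integral_cong refl) (auto simp: gg_def thr_policy_def indicator_def)
  also have "\<dots> = (\<Sum>d\<le>x. gg p k x j d * pmf (Dd q x) d)"
    using Dd_support[OF q, of x]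
    by (subst integral_measure_pmf_real[of "{..x}"]) auto
  finally show ?thesis .
qed

lemma sum_Dd: "0 < q \<Longrightarrow> q < 1 \<Longrightarrow> (\<Sum>d\<le>x. pmf (Dd q x) d) = 1"
  using Dd_support[of q x] by (intro sum_pmf_eq_1) auto

lemma AA_one:
  assumes p: "0 \<le> p" "p \<le> 1" and q: "0 < q" "q < 1"
    and "x \<le> k \<longrightarrow> x + 1 \<le> j" and "x \<le> j"
  shows "AA p q k x j = 1"
proof -
  have "\<And>d. gg p k x j d = 1" using assms by (auto simp: gg_def)
  then show ?thesis using AA_sum[OF p q] sum_Dd[OF q] by simp
qed

lemma AA_diag:
  assumes p: "0 \<le> p" "p \<le> 1" and q: "0 < q" "q < 1" and "j \<le> k"
  shows "AA p q k j j = 1 - p * aa q j"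
proof -
  have "(\<Sum>d\<le>j. gg p k j j d * pmf (Dd q j) d) = (\<Sum>d\<le>j. pmf (Dd q j) d - (if d = 0 then p * pmf (Dd q j) d else 0))"
    using assms by (intro sum.cong) (auto simp: gg_def algebra_simps)
  also have "\<dots> = 1 - p * aa q j"
    by (simp add: sum_subtractf sum_Dd[OF q] aa_def)
  finally show ?thesis using AA_sum[OF p q] by simp
qed

lemma AA_top:
  assumes p: "0 \<le> p" "p \<le> 1" and q: "0 < q" "q < 1" and "k < x" "1 \<le> x"
  shows "AA p q k x (x - 1) = 1 - aa q x"
proof -
  have "(\<Sum>d\<le>x. gg p k x (x-1) d * pmf (Dd q x) d) = (\<Sum>d\<le>x. pmf (Dd q x) d - (if d = 0 then pmf (Dd q x) d else 0))"
    using assms by (intro sum.cong) (auto simp: gg_def algebra_simps)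
  also have "\<dots> = 1 - aa q x"
    by (simp add: sum_subtractf sum_Dd[OF q] aa_def)
  finally show ?thesis using AA_sum[OF p q] by simp
qed

lemma AA_pos_high:
  assumes p: "0 \<le> p" "p < 1" and q: "0 < q" "q < 1"
  shows "0 < AA p q k x j"
proof -
  have "0 < gg p k x j x * pmf (Dd q x) x"
    using pmf_Dd_top[OF q, of x] p by (auto simp: gg_def intro!: add_pos_nonneg)
  also have "\<dots> \<le> (\<Sum>d\<le>x. gg p k x j d * pmf (Dd q x) d)"
    by (rule member_le_sum) (use p in \<open>auto simp: gg_def\<close>)
  finally show ?thesis using AA_sum[of p q] p q by simp
qed

lemma AA_act_pas:
  assumes p: "0 \<le> p" "p \<le> 1" and q: "0 < q" "q < 1" and "x \<le> k" "k' < x"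
  shows "(1 - p) * AA p q k' x j \<le> AA p q k x j"
proof -
  have "(1 - p) * AA p q k' x j = (\<Sum>d\<le>x. (1 - p) * gg p k' x j d * pmf (Dd q x) d)"
    using AA_sum[OF p q] by (simp add: sum_distrib_left mult.assoc)
  also have "\<dots> \<le> (\<Sum>d\<le>x. gg p k x j d * pmf (Dd q x) d)"
    using assms by (intro sum_mono mult_right_mono) (auto simp: gg_def)
  finally show ?thesis using AA_sum[OF p q] by simp
qed

lemma AA_same: "(x \<le> k \<longleftrightarrow> x \<le> k') \<Longrightarrow> AA p q k x j = AA p q k' x j"
  by (simp add: AA_def queue_trans_def thr_policy_def)

lemma AA_nonneg: "0 \<le> AA p q k x j"
  by (simp add: AA_def)

lemma stat_eq: "stationary p q k \<pi> \<Longrightarrow>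
    measure (measure_pmf \<pi>) {..j} = (\<integral>x. AA p q k x j \<partial>measure_pmf \<pi>)"
  unfolding stationary_def AA_def
  by (metis measure_bind_pmf_real)

lemma stat_support:
  assumes p: "0 \<le> p" "p < 1" and q: "0 < q" "q < 1" and st: "stationary p q k \<pi>"
  shows "set_pmf \<pi> \<subseteq> {..k+1}"
proof -
  define f where "f x = AA p q k x (k+1) - indicator {..k+1} x" for x
  have f0: "x \<le> k + 1 \<Longrightarrow> f x = 0" for x
    using AA_one[where p=p and q=q and k=k and x=x and j="k+1"] p q by (simp add: f_def)
  have fpos: "x > k + 1 \<Longrightarrow> f x > 0" for x
    using AA_pos_high[where p=p and q=q and k=k and x=x and j="k+1"] p q by (simp add: f_def)
  have fnn: "0 \<le> f x" for x
    using f0 fpos by (cases "x \<le> k+1") (auto intro: less_imp_le)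
  have int1: "integrable (measure_pmf \<pi>) (\<lambda>x. AA p q k x (k+1))"
    by (rule measure_pmf.integrable_const_bound[where B=1]) (auto simp: AA_def)
  have int2: "integrable (measure_pmf \<pi>) (\<lambda>x. indicator {..k+1} x :: real)"
    by (rule measure_pmf.integrable_const_bound[where B=1]) auto
  have intf: "integrable (measure_pmf \<pi>) f"
    unfolding f_def using int1 int2 by auto
  have "(\<integral>x. f x \<partial>measure_pmf \<pi>) = 0"
    unfolding f_def using int1 int2 stat_eq[OF st, of "k+1"] by simp
  then have "AE x in measure_pmf \<pi>. f x = 0"
    using integral_nonneg_eq_0_iff_AE[OF intf] fnn by auto
  then have "\<And>x. x \<in> set_pmf \<pi> \<Longrightarrow> f x = 0" by (simp add: AE_measure_pmf_iff)
  then show ?thesis using fpos by (force simp: subset_iff not_le[symmetric])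
qed

lemma stat_sum:
  assumes p: "0 \<le> p" "p < 1" and q: "0 < q" "q < 1" and st: "stationary p q k \<pi>"
  shows "(\<Sum>x\<le>j. pmf \<pi> x) = (\<Sum>x\<le>k+1. pmf \<pi> x * AA p q k x j)"
proof -
  have sup: "set_pmf \<pi> \<subseteq> {..k+1}" by (rule stat_support[OF assms])
  have "(\<Sum>x\<le>j. pmf \<pi> x) = measure (measure_pmf \<pi>) {..j}"
    by (simp add: measure_measure_pmf_finite)
  also have "\<dots> = (\<integral>x. AA p q k x j \<partial>measure_pmf \<pi>)" by (rule stat_eq[OF st])
  also have "\<dots> = (\<Sum>x\<le>k+1. AA p q k x j * pmf \<pi> x)"
    using sup by (intro integral_measure_pmf_real) auto
  finally show ?thesis by (simp add: mult.commute)
qed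

lemma stat_cut:
  assumes p: "0 \<le> p" "p < 1" and q: "0 < q" "q < 1" and st: "stationary p q k \<pi>"
    and j: "j \<le> k"
  shows "p * aa q j * pmf \<pi> j = (\<Sum>x\<in>{j<..k+1}. pmf \<pi> x * AA p q k x j)"
proof -
  have u: "{..k+1} = {..<j} \<union> {j} \<union> {j<..k+1}" using j by auto
  have u2: "{..j} = {..<j} \<union> {j}" by auto
  have "(\<Sum>x\<le>k+1. pmf \<pi> x * AA p q k x j) =
     (\<Sum>x\<in>{..<j}. pmf \<pi> x * AA p q k x j) + pmf \<pi> j * AA p q k j j + (\<Sum>x\<in>{j<..k+1}. pmf \<pi> x * AA p q k x j)"
    unfolding u by (subst sum.union_disjoint; auto)+
  also have "(\<Sum>x\<in>{..<j}. pmf \<pi> x * AA p q k x j) = (\<Sum>x\<in>{..<j}. pmf \<pi> x)"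
    using AA_one[where p=p and q=q and k=k and j=j] p q j by (intro sum.cong) auto
  also have "AA p q k j j = 1 - p * aa q j" using AA_diag[where p=p and q=q and j=j and k=k] p q j by simp
  finally have "(\<Sum>x\<le>k+1. pmf \<pi> x * AA p q k x j) = (\<Sum>x\<in>{..<j}. pmf \<pi> x) + pmf \<pi> j * (1 - p * aa q j)
      + (\<Sum>x\<in>{j<..k+1}. pmf \<pi> x * AA p q k x j)" .
  moreover have "(\<Sum>x\<le>j. pmf \<pi> x) = (\<Sum>x\<in>{..<j}. pmf \<pi> x) + pmf \<pi> j"
    unfolding u2 by (subst sum.union_disjoint) auto
  ultimately show ?thesis using stat_sum[OF assms(1-5), of j] by (simp add: algebra_simps)
qed

function uu :: "real \<Rightarrow> real \<Rightarrow> nat \<Rightarrow> nat \<Rightarrow> real" where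
  "uu p q k j = (if k + 1 \<le> j then 1 else
     (\<Sum>x\<in>{j<..k+1}. uu p q k x * AA p q k x j) / (p * aa q j))"
  by auto
termination by (relation "Wellfounded.measure (\<lambda>(p, q, k, j). k + 1 - j)") auto

declare uu.simps[simp del]

lemma uu_top: "uu p q k (k+1) = 1" by (subst uu.simps) simp

lemma uu_rec: "j \<le> k \<Longrightarrow> 0 < p \<Longrightarrow> 0 < q \<Longrightarrow> q < 1 \<Longrightarrow>
   uu p q k j * (p * aa q j) = (\<Sum>x\<in>{j<..k+1}. uu p q k x * AA p q k x j)"
  using aa_pos[of q j] by (subst uu.simps) simp

lemma uu_nonneg:
  assumes "0 < p" "0 < q" "q < 1"
  shows "0 \<le> uu p q k j"
proof (induction "k + 1 - j" arbitrary: j rule: less_induct)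
  case less
  show ?case
  proof (cases "k + 1 \<le> j")
    case True then show ?thesis by (subst uu.simps) simp
  next
    case False
    have "0 \<le> (\<Sum>x\<in>{j<..k+1}. uu p q k x * AA p q k x j)"
      using less False by (intro sum_nonneg mult_nonneg_nonneg AA_nonneg) auto
    then show ?thesis using False aa_pos[of q j] assms by (subst uu.simps) simp
  qed
qed

lemma stat_uu:
  assumes p: "0 < p" "p < 1" and q: "0 < q" "q < 1" and st: "stationary p q k \<pi>"
  shows "j \<le> k + 1 \<Longrightarrow> pmf \<pi> j = pmf \<pi> (k+1) * uu p q k j"
proof (induction "k + 1 - j" arbitrary: j rule: less_induct)
  case less
  show ?case
  proof (cases "j = k + 1")
    case True then show ?thesis by (subst uu.simps) simp
  next
    case False
    then have j: "j \<le> k" using less by simp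
    have "p * aa q j * pmf \<pi> j = (\<Sum>x\<in>{j<..k+1}. pmf \<pi> x * AA p q k x j)"
      using stat_cut[of p q k \<pi> j] p q st j by simp
    also have "\<dots> = (\<Sum>x\<in>{j<..k+1}. pmf \<pi> (k+1) * uu p q k x * AA p q k x j)"
    proof (intro sum.cong refl)
      fix x assume x: "x \<in> {j<..k+1}"
      then have "pmf \<pi> x = pmf \<pi> (k+1) * uu p q k x" using less(1)[of x] by auto
      then show "pmf \<pi> x * AA p q k x j = pmf \<pi> (k+1) * uu p q k x * AA p q k x j" by simp
    qed
    also have "\<dots> = pmf \<pi> (k+1) * (uu p q k j * (p * aa q j))"
      using uu_rec[of j k p q] j p q by (simp add: sum_distrib_left mult.assoc)
    finally show ?thesis using aa_pos[of q j] p q by (simp add: algebra_simps)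
  qed
qed

definition UU :: "real \<Rightarrow> real \<Rightarrow> nat \<Rightarrow> real" where
  "UU p q k = (\<Sum>j\<le>k+1. uu p q k j)"

lemma stat_value:
  assumes p: "0 < p" "p < 1" and q: "0 < q" "q < 1" and st: "stationary p q k \<pi>"
  shows "(\<Sum>j\<le>k. pmf \<pi> j) = 1 - 1 / UU p q k"
proof -
  have sup: "set_pmf \<pi> \<subseteq> {..k+1}" using stat_support[of p q k \<pi>] assms by simp
  have s1: "1 = (\<Sum>j\<le>k+1. pmf \<pi> j)" using sum_pmf_eq_1[of "{..k+1}" \<pi>] sup by simp
  also have "\<dots> = pmf \<pi> (k+1) * UU p q k"
    unfolding UU_def sum_distrib_left
  proof (intro sum.cong refl)
    fix x assume x: "x \<in> {..k+1}"
    then show "pmf \<pi> x = pmf \<pi> (k+1) * uu p q k x" using stat_uu[OF assms, of x] by simp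
  qed
  finally have e: "pmf \<pi> (k+1) * UU p q k = 1" by simp
  have "(\<Sum>j\<le>k+1. pmf \<pi> j) = (\<Sum>j\<le>k. pmf \<pi> j) + pmf \<pi> (k+1)" by simp
  then have "(\<Sum>j\<le>k. pmf \<pi> j) = 1 - pmf \<pi> (k+1)" using s1 by simp
  moreover have "UU p q k \<noteq> 0" using e by auto
  then have "pmf \<pi> (k+1) = 1 / UU p q k" using e by (simp add: field_simps)
  ultimately show ?thesis by simp
qed

lemma uu_next_top:
  assumes p: "0 < p" "2 * p < q" and q: "q < 1"
  shows "1 \<le> uu p q (k+1) (k+1) * (1 - p)"
proof -
  have q0: "0 < q" using p by simp
  have "uu p q (k+1) (k+1) * (p * aa q (k+1)) = (\<Sum>x\<in>{k+1<..k+2}. uu p q (k+1) x * AA p q (k+1) x (k+1))"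
    using uu_rec[of "k+1" "k+1" p q] p q0 q by simp
  also have "{k+1<..k+2} = {k+2}" by auto
  also have "(\<Sum>x\<in>{k+2}. uu p q (k+1) x * AA p q (k+1) x (k+1)) = 1 - aa q (k+2)"
    using uu_top[of p q "k+1"] AA_top[of p q "k+1" "k+2"] p q0 q by simp
  finally have e: "uu p q (k+1) (k+1) * (p * aa q (k+1)) = 1 - aa q (k+2)" .
  have a1: "aa q (k+1) \<le> 1 / (1 + q)" "aa q (k+2) \<le> 1 / (1 + q)"
    using aa_le[of q] q0 q by auto
  have a0: "0 < aa q (k+1)" using aa_pos q0 q by auto
  have "p * aa q (k+1) \<le> p / (1 + q)" using mult_left_mono[OF a1(1), of p] p by simp
  also have "p / (1 + q) \<le> (1 - p) * (q / (1 + q))"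
  proof -
    have pq: "p * q \<le> (1/2) * q" using p q q0 by (intro mult_right_mono) auto
    have "p \<le> (1 - p) * q" using p pq left_diff_distrib[of 1 p q] by linarith
    then have "p / (1 + q) \<le> ((1 - p) * q) / (1 + q)" using q0 by (intro divide_right_mono) auto
    then show ?thesis by simp
  qed
  also have "q / (1 + q) = 1 - 1 / (1 + q)" using q0 by (simp add: field_simps)
  also have "(1 - p) * (1 - 1 / (1 + q)) \<le> (1 - p) * (1 - aa q (k+2))"
    using a1 p q by (intro mult_left_mono) auto
  also have "\<dots> = (1 - p) * (uu p q (k+1) (k+1) * (p * aa q (k+1)))" using e by simp
  finally have "p * aa q (k+1) * 1 \<le> p * aa q (k+1) * (uu p q (k+1) (k+1) * (1 - p))"
    by (simp add: algebra_simps)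
  then show ?thesis using p a0 by (simp add: mult_le_cancel_left_pos)
qed

lemma uu_mono_k:
  assumes p: "0 < p" "2 * p < q" and q: "q < 1"
  shows "j \<le> k + 1 \<Longrightarrow> uu p q k j \<le> uu p q (k+1) j"
proof (induction "k + 1 - j" arbitrary: j rule: less_induct)
  case less
  have q0: "0 < q" and p1: "p < 1" using p q by auto
  have top: "1 \<le> uu p q (k+1) (k+1) * (1 - p)" by (rule uu_next_top[OF assms])
  have nn: "\<And>k j. 0 \<le> uu p q k j" using uu_nonneg p q0 q by auto
  show ?case
  proof (cases "j = k + 1")
    case True
    have "uu p q (k+1) (k+1) * (1 - p) \<le> uu p q (k+1) (k+1)"
      using nn[of "k+1" "k+1"] p by (simp add: mult_left_le)
    then show ?thesis using True top uu_top[of p q k] by simp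
  next
    case False
    then have j: "j \<le> k" using less by simp
    have "uu p q k j * (p * aa q j) = (\<Sum>x\<in>{j<..k+1}. uu p q k x * AA p q k x j)"
      using uu_rec[of j k p q] j p q0 q by simp
    also have "\<dots> \<le> (\<Sum>x\<in>{j<..k+1}. uu p q (k+1) x * AA p q (k+1) x j)"
    proof (rule sum_mono)
      fix x assume x: "x \<in> {j<..k+1}"
      show "uu p q k x * AA p q k x j \<le> uu p q (k+1) x * AA p q (k+1) x j"
      proof (cases "x = k + 1")
        case True
        have "uu p q k x * AA p q k x j = AA p q k (k+1) j" using True uu_top[of p q k] by simp
        also have "\<dots> \<le> (uu p q (k+1) (k+1) * (1 - p)) * AA p q k (k+1) j"
          using top AA_nonneg[of p q k "k+1" j] by (simp add: mult_le_cancel_right1)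
        also have "\<dots> = uu p q (k+1) (k+1) * ((1 - p) * AA p q k (k+1) j)" by simp
        also have "\<dots> \<le> uu p q (k+1) (k+1) * AA p q (k+1) (k+1) j"
          using AA_act_pas[of p q "k+1" "k+1" k j] p p1 q0 q nn[of "k+1" "k+1"]
          by (intro mult_left_mono) auto
        finally show ?thesis using True by simp
      next
        case False
        then have xk: "x \<le> k" using x by auto
        have "AA p q k x j = AA p q (k+1) x j" using xk by (intro AA_same) auto
        moreover have "uu p q k x \<le> uu p q (k+1) x" using less(1)[of x] x by auto
        ultimately show ?thesis using AA_nonneg[of p q k x j] by (simp add: mult_right_mono)
      qed
    qed
    also have "\<dots> \<le> (\<Sum>x\<in>{j<..k+2}. uu p q (k+1) x * AA p q (k+1) x j)"
      using nn AA_nonneg by (intro sum_mono2) auto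
    also have "\<dots> = uu p q (k+1) j * (p * aa q j)"
      using uu_rec[of j "k+1" p q] j p q0 q by simp
    finally show ?thesis using aa_pos[of q j] p q0 q by (simp add: mult_le_cancel_right_pos)
  qed
qed

lemma UU_mono_step:
  assumes p: "0 < p" "2 * p < q" and q: "q < 1"
  shows "UU p q k \<le> UU p q (Suc k)"
proof -
  have "UU p q k \<le> (\<Sum>j\<le>k+1. uu p q (k+1) j)"
    unfolding UU_def using uu_mono_k[OF assms] by (intro sum_mono) auto
  also have "\<dots> \<le> (\<Sum>j\<le>k+2. uu p q (k+1) j)"
    using uu_nonneg[of p q] p q by (intro sum_mono2) auto
  finally show ?thesis by (simp add: UU_def)
qed

lemma UU_ge1:
  assumes p: "0 < p" "0 < q" and q: "q < 1"
  shows "1 \<le> UU p q k"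
proof -
  have "uu p q k (k+1) \<le> UU p q k"
    unfolding UU_def using uu_nonneg[of p q] assms by (intro member_le_sum) auto
  then show ?thesis using uu_top[of p q k] by simp
qed

theorem lemma8:
  fixes p q :: real and k k' :: nat and \<pi> \<pi>' :: "nat pmf"
  assumes "0 < p" and "2 * p < q" and "q < 1"
    and "k \<le> k'"
    and "stationary p q k \<pi>" and "stationary p q k' \<pi>'"
  shows "(\<Sum>j\<le>k. pmf \<pi> j) \<le> (\<Sum>j\<le>k'. pmf \<pi>' j)"
proof -
  have q0: "0 < q" and p1: "p < 1" using assms by auto
  have "UU p q k \<le> UU p q k'"
    using UU_mono_step[OF assms(1-3)] assms(4) by (rule lift_Suc_mono_le)
  moreover have "1 \<le> UU p q k" using UU_ge1 assms q0 by auto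
  ultimately have "1 / UU p q k' \<le> 1 / UU p q k"
    by (intro divide_left_mono) auto
  then show ?thesis
    using stat_value[of p q k \<pi>] stat_value[of p q k' \<pi>'] assms q0 p1 by simp
qed

end
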